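(* Let $h\ge 0$ be an integer and let $G$ be an $h$-almost-bipartite graph on $n$ vertices. Then $G$ contains at most $2^h n^2+2$ cliques.
   Context: Graphs are simple, finite and undirected. A clique is a set of pairwise adjacent vertices (the empty set and single vertices count). A graph $G$ is $h$-almost bipartite if $G-A$ is bipartite for some set $A\subseteq V(G)$ with $|A|\le h$. *)

theory Defs
  imports Main
begin

definition simple_graph :: "'a set \<Rightarrow> ('a \<Rightarrow> 'a \<Rightarrow> bool) \<Rightarrow> bool" where
  "simple_graph V E \<longleftrightarrow> finite V \<and> (\<forall>u v. E u v \<longrightarrow> u \<in> V \<and> v \<in> V)
     \<and> (\<forall>u v. E u v \<longrightarrow> E v u) \<and> (\<forall>v. \<not> E v v)"

definition is_clique :: "'a set \<Rightarrow> ('a \<Rightarrow> 'a \<Rightarrow> bool) \<Rightarrow> 'a set \<Rightarrow> bool" where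
  "is_clique V E K \<longleftrightarrow> K \<subseteq> V \<and> (\<forall>u\<in>K. \<forall>v\<in>K. u \<noteq> v \<longrightarrow> E u v)"

definition cliques :: "'a set \<Rightarrow> ('a \<Rightarrow> 'a \<Rightarrow> bool) \<Rightarrow> 'a set set" where
  "cliques V E = {K. is_clique V E K}"

definition bipartite_on :: "'a set \<Rightarrow> ('a \<Rightarrow> 'a \<Rightarrow> bool) \<Rightarrow> bool" where
  "bipartite_on W E \<longleftrightarrow> (\<exists>X Y. X \<union> Y = W \<and> X \<inter> Y = {}
      \<and> (\<forall>u\<in>X. \<forall>v\<in>X. \<not> E u v) \<and> (\<forall>u\<in>Y. \<forall>v\<in>Y. \<not> E u v))"

definition almost_bipartite :: "nat \<Rightarrow> 'a set \<Rightarrow> ('a \<Rightarrow> 'a \<Rightarrow> bool) \<Rightarrow> bool" where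
  "almost_bipartite h V E \<longleftrightarrow> (\<exists>A. A \<subseteq> V \<and> card A \<le> h \<and> bipartite_on (V - A) E)"

end

theory Submission
  imports Defs
begin

lemma small_card_cases:
  assumes "finite T" "card T \<le> 2"
  shows "T = {} \<or> (\<exists>x y. T = {x, y})"
proof -
  have "card T = 0 \<or> card T = 1 \<or> card T = 2" using assms(2) by linarith
  thus ?thesis using assms(1)
    by (auto simp: card_1_singleton_iff card_2_iff)
qed

lemma arith_fin:
  fixes a m h n :: nat
  assumes "a + m = n" "a \<le> h"
  shows "2 ^ a * (1 + m * m) \<le> 2 ^ h * n ^ 2 + 2"
proof (cases "a = 0")
  case True
  hence "n = m" using assms by simp
  have "1 + m*m \<le> 2^h * (m*m) + 2"
  proof -
    have "1 \<le> (2::nat)^h" by simp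
    hence "m*m \<le> 2^h * (m*m)" by simp
    thus ?thesis by linarith
  qed
  thus ?thesis using True \<open>n = m\<close> by (simp add: power2_eq_square)
next
  case False
  have "n \<ge> m + 1" using assms False by linarith
  hence "n*n \<ge> (m+1)*(m+1)" by (intro mult_le_mono) auto
  hence "1 + m*m \<le> n*n" by (simp add: algebra_simps)
  hence "2^a * (1 + m*m) \<le> 2^h * (n*n)"
    using assms(2) by (intro mult_le_mono) (auto intro: power_increasing)
  thus ?thesis by (simp add: power2_eq_square)
qed

theorem lemma8:
  fixes V :: "'a set" and E :: "'a \<Rightarrow> 'a \<Rightarrow> bool" and h n :: nat
  assumes "simple_graph V E"
    and "card V = n"
    and "almost_bipartite h V E"
  shows "card (cliques V E) \<le> 2 ^ h * n ^ 2 + 2"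
proof -
  have finV: "finite V" using assms(1) by (simp add: simple_graph_def)
  obtain A where A: "A \<subseteq> V" "card A \<le> h" "bipartite_on (V - A) E"
    using assms(3) by (auto simp: almost_bipartite_def)
  obtain X Y where XY: "X \<union> Y = V - A" "X \<inter> Y = {}"
      "\<forall>u\<in>X. \<forall>v\<in>X. \<not> E u v" "\<forall>u\<in>Y. \<forall>v\<in>Y. \<not> E u v"
    using A(3) by (auto simp: bipartite_on_def)
  define W where "W = V - A"
  have finA: "finite A" using finV A(1) finite_subset by blast
  have finW: "finite W" using finV W_def by simp
  define S where "S = {T. T \<subseteq> W \<and> card T \<le> 2}"
  have Ssub: "S \<subseteq> insert {} ((\<lambda>(x,y). {x,y}) ` (W \<times> W))"
  proof
    fix T assume "T \<in> S"
    hence T: "T \<subseteq> W" "card T \<le> 2" by (auto simp: S_def)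
    have "finite T" using T(1) finW finite_subset by blast
    from small_card_cases[OF this T(2)] T(1)
    show "T \<in> insert {} ((\<lambda>(x,y). {x,y}) ` (W \<times> W))" by auto
  qed
  have cardS: "card S \<le> 1 + card W * card W"
  proof -
    have "card S \<le> card (insert {} ((\<lambda>(x,y). {x,y}) ` (W \<times> W)))"
      using Ssub finW by (intro card_mono) auto
    also have "\<dots> \<le> Suc (card ((\<lambda>(x,y). {x,y}) ` (W \<times> W)))"
      by (rule card_insert_le_m1) auto
    also have "card ((\<lambda>(x,y). {x,y}) ` (W \<times> W)) \<le> card (W \<times> W)"
      using finW by (intro card_image_le) auto
    finally show ?thesis by (simp add: card_cartesian_product)
  qed
  have maps: "(\<lambda>K. (K \<inter> A, K - A)) ` cliques V E \<subseteq> Pow A \<times> S"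
  proof
    fix p assume "p \<in> (\<lambda>K. (K \<inter> A, K - A)) ` cliques V E"
    then obtain K where K: "is_clique V E K" and p: "p = (K \<inter> A, K - A)"
      by (auto simp: cliques_def)
    have KV: "K \<subseteq> V" using K by (simp add: is_clique_def)
    have fK: "finite K" using KV finV finite_subset by blast
    have c1: "card (K \<inter> X) \<le> 1"
      using K XY(3) fK by (auto simp: One_nat_def card_le_Suc0_iff_eq is_clique_def; blast)
    have c2: "card (K \<inter> Y) \<le> 1"
      using K XY(4) fK by (auto simp: One_nat_def card_le_Suc0_iff_eq is_clique_def; blast)
    have "K - A = (K \<inter> X) \<union> (K \<inter> Y)" using XY(1) KV by blast
    hence "card (K - A) \<le> card (K \<inter> X) + card (K \<inter> Y)" by (simp add: card_Un_le)
    hence "card (K - A) \<le> 2" using c1 c2 by linarith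
    moreover have "K - A \<subseteq> W" using KV W_def by blast
    ultimately show "p \<in> Pow A \<times> S" using p S_def by auto
  qed
  have inj: "inj_on (\<lambda>K. (K \<inter> A, K - A)) (cliques V E)"
    by (rule inj_onI) (metis Int_Diff_Un prod.inject)
  have finS: "finite S" using finW by (simp add: S_def)
  have "card (cliques V E) = card ((\<lambda>K. (K \<inter> A, K - A)) ` cliques V E)"
    using card_image[OF inj] by simp
  also have "\<dots> \<le> card (Pow A \<times> S)"
    using maps finA finS by (intro card_mono) auto
  also have "\<dots> = 2 ^ card A * card S" using finA by (simp add: card_cartesian_product card_Pow)
  also have "\<dots> \<le> 2 ^ card A * (1 + card W * card W)" using cardS by (intro mult_le_mono2)
  also have "\<dots> \<le> 2 ^ h * n ^ 2 + 2"
  proof (rule arith_fin[OF _ A(2)])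
    show "card A + card W = n" using W_def A(1) finA assms(2) card_Diff_subset[OF finA A(1)]
      card_mono[OF finV A(1)] by simp
  qed
  finally show ?thesis .
qed

end
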